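(* Let $\eta,\omega\in\mathbb{R}$ with $\omega\neq0$, and for $s,c\in\mathbb{R}$ let $g_{s,c}(a,b)=e^{-(1+c)a}\big[1+e^{-2a}b^2+(\eta+\omega e^{-a})^2\big]^{-s/2}$ on $\mathbb{R}^2$. Then (1) $g_{s,c}\in L^1(\mathbb{R}^2,da\,db)$ if and only if $c>0$ and $s>1+c$; (2) there is a constant $M_{s,c}>0$ such that $|(Xg_{s,c})(a,b)|\le M_{s,c}\,g_{s,c}(a,b)$ for all $(a,b)\in\mathbb{R}^2$, for each of $X=\partial_a$, $X=\partial_b$ and $X=\partial_a\partial_b$. *)

theory Defs
  imports "HOL-Analysis.Analysis"
begin

definition gfun :: "real \<Rightarrow> real \<Rightarrow> real \<Rightarrow> real \<Rightarrow> real \<Rightarrow> real \<Rightarrow> real" where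
  "gfun \<eta> \<omega> s c a b =
     exp (- (1 + c) * a) * (1 + exp (- 2 * a) * b\<^sup>2 + (\<eta> + \<omega> * exp (- a))\<^sup>2) powr (- s / 2)"

end

theory Submission
  imports Defs
begin


lemma pow_tail_fin:
  fixes s :: real assumes s: "s > 1"
  shows "(\<integral>\<^sup>+t. ennreal (t powr (-s)) * indicator {1..} t \<partial>lborel) < \<infinity>"
proof -
  have "(\<integral>\<^sup>+t. ennreal (t powr (-s)) * indicator {1..} t \<partial>lborel) = ennreal (-(1 powr (-s+1)) / (-s+1))"
    by (rule nn_integral_has_integral_lebesgue') (use has_integral_powr_to_inf[of "-s" 1] s in auto)
  then show ?thesis by simp
qed

lemma pt_bound:
  fixes s t :: real assumes s: "s > 1"
  shows "ennreal ((1+t^2) powr (-s/2)) \<le> indicator {-1..1} t + (ennreal (t powr (-s)) * indicator {1..} t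
          + ennreal ((-t) powr (-s)) * indicator {1..} (-t))"
proof (cases "\<bar>t\<bar> \<le> 1")
  case True
  have "(1+t^2) powr (-s/2) \<le> 1"
    using s by (smt (verit, best) field_sum_of_halves less_divide_eq_1_pos
    powr_minus_divide powr_mono realpow_square_minus_le)
  then have "ennreal ((1+t^2) powr (-s/2)) \<le> indicator {-1..1} t" using True
    by (auto simp: indicator_def ennreal_leI)
  then show ?thesis by (rule order_trans) (simp add: add_increasing2)
next
  case False
  have "(1+t^2) powr (-s/2) \<le> (t^2) powr (-s/2)"
    using s False by (intro powr_mono2') auto
  also have "(t^2) powr (-s/2) = \<bar>t\<bar> powr (-s)"
  proof -
    have h: "t^2 = \<bar>t\<bar> powr 2" using False by (simp add: powr_numeral)
    have "(t^2) powr (-s/2) = \<bar>t\<bar> powr (2 * (-s/2))" by (subst h) (rule powr_powr)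
    then show ?thesis by simp
  qed
  finally have "(1+t^2) powr (-s/2) \<le> \<bar>t\<bar> powr (-s)" .
  then show ?thesis using False by (cases "t \<ge> 0") (auto simp: indicator_def)
qed



definition Af :: "real \<Rightarrow> real \<Rightarrow> real \<Rightarrow> real" where
  "Af \<eta> \<omega> a = 1 + (\<eta> + \<omega> * exp (- a))\<^sup>2"

definition Iint :: "real \<Rightarrow> ennreal" where
  "Iint s = (\<integral>\<^sup>+t. ennreal ((1+t^2) powr (-s/2)) \<partial>lborel)"

lemma Af_ge1: "Af \<eta> \<omega> a \<ge> 1" by (simp add: Af_def)

lemma gfun_alt: "gfun \<eta> \<omega> s c a b = exp (-(1+c)*a) * (Af \<eta> \<omega> a + exp (-2*a)*b^2) powr (-s/2)"
  by (simp add: gfun_def Af_def add_ac)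

lemma inner:
  "(\<integral>\<^sup>+b. ennreal (gfun \<eta> \<omega> s c a b) \<partial>lborel) = ennreal (exp (-c*a) * Af \<eta> \<omega> a powr ((1-s)/2)) * Iint s"
proof -
  define A where "A = Af \<eta> \<omega> a"
  have A1: "A \<ge> 1" unfolding A_def by (rule Af_ge1)
  define k where "k = exp a * sqrt A"
  have k: "k > 0" using A1 by (simp add: k_def)
  have [measurable]: "(\<lambda>b. ennreal (gfun \<eta> \<omega> s c a b)) \<in> borel_measurable borel"
    unfolding gfun_def by measurable
  have "(\<integral>\<^sup>+b. ennreal (gfun \<eta> \<omega> s c a b) \<partial>lborel) = \<bar>k\<bar> * (\<integral>\<^sup>+t. ennreal (gfun \<eta> \<omega> s c a (0 + k*t)) \<partial>lborel)"
    by (rule nn_integral_real_affine) (use k in auto)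
  also have "(\<lambda>t. gfun \<eta> \<omega> s c a (0 + k*t)) = (\<lambda>t. (exp (-(1+c)*a) * A powr (-s/2)) * (1+t^2) powr (-s/2))"
  proof
    fix t
    have e: "exp (- 2 * a) * (k*t)^2 = A * t^2"
      using A1 by (simp add: k_def power_mult_distrib exp_minus field_simps flip: exp_add exp_double)
    have "gfun \<eta> \<omega> s c a (0 + k*t) = exp (-(1+c)*a) * (A * (1 + t^2)) powr (-s/2)"
      unfolding gfun_alt A_def[symmetric] add_0_left e by (simp add: algebra_simps)
    also have "\<dots> = exp (-(1+c)*a) * A powr (-s/2) * (1+t^2) powr (-s/2)"
      using A1 by (simp add: powr_mult)
    finally show "gfun \<eta> \<omega> s c a (0 + k*t) = (exp (-(1+c)*a) * A powr (-s/2)) * (1+t^2) powr (-s/2)" .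
  qed
  also have "(\<integral>\<^sup>+t. ennreal ((exp (-(1+c)*a) * A powr (-s/2)) * (1+t^2) powr (-s/2)) \<partial>lborel)
     = ennreal (exp (-(1+c)*a) * A powr (-s/2)) * Iint s"
    unfolding Iint_def by (simp add: ennreal_mult nn_integral_cmult)
  also have "\<bar>k\<bar> * (ennreal (exp (-(1+c)*a) * A powr (-s/2)) * Iint s) = ennreal (k * (exp (-(1+c)*a) * A powr (-s/2))) * Iint s"
    using k by (simp add: ennreal_mult mult.assoc)
  also have "k * (exp (-(1+c)*a) * A powr (-s/2)) = exp (-c*a) * A powr ((1-s)/2)"
  proof -
    have "k * (exp (-(1+c)*a) * A powr (-s/2)) = (exp a * exp (-(1+c)*a)) * (A powr (1/2) * A powr (-s/2))"
      using A1 by (simp add: k_def powr_half_sqrt)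
    also have "\<dots> = exp (-c*a) * A powr ((1-s)/2)"
      by (simp add: flip: exp_add powr_add) (simp add: algebra_simps diff_divide_distrib)
    finally show ?thesis .
  qed
  finally show ?thesis by (simp add: A_def)
qed



lemma exp_tail:
  fixes d :: real and S :: "real set"
  assumes S: "{0<..} \<subseteq> S" "S \<subseteq> {0..}"
  shows "(\<integral>\<^sup>+a. ennreal (exp (-d*a)) * indicator S a \<partial>lborel) < \<infinity> \<longleftrightarrow> d > 0"
proof
  assume fin: "(\<integral>\<^sup>+a. ennreal (exp (-d*a)) * indicator S a \<partial>lborel) < \<infinity>"
  show "d > 0"
  proof (rule ccontr)
    assume "\<not> d > 0"
    then have d: "d \<le> 0" by simp
    have "of_nat n \<le> (\<integral>\<^sup>+a. ennreal (exp (-d*a)) * indicator S a \<partial>lborel)" for n :: nat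
    proof -
      have "of_nat n = emeasure lborel {0<..<real n}" by (simp add: ennreal_of_nat_eq_real_of_nat)
      also have "\<dots> = (\<integral>\<^sup>+a. indicator {0<..<real n} a \<partial>lborel)" by simp
      also have "\<dots> \<le> (\<integral>\<^sup>+a. ennreal (exp (-d*a)) * indicator S a \<partial>lborel)"
      proof (rule nn_integral_mono)
        fix a :: real
        show "indicator {0<..<real n} a \<le> ennreal (exp (-d*a)) * indicator S a"
          using d S by (auto simp: indicator_def mult_nonpos_nonneg)
      qed
      finally show ?thesis .
    qed
    moreover obtain r where r: "(\<integral>\<^sup>+a. ennreal (exp (-d*a)) * indicator S a \<partial>lborel) = ennreal r" "r \<ge> 0"
      using fin by (cases "(\<integral>\<^sup>+a. ennreal (exp (-d*a)) * indicator S a \<partial>lborel)") auto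
    ultimately have "ennreal (real (nat \<lceil>r\<rceil> + 1)) \<le> ennreal r"
      by (metis ennreal_of_nat_eq_real_of_nat)
    then have "real (nat \<lceil>r\<rceil> + 1) \<le> r" by (rule ennreal_le_iff[OF r(2), THEN iffD1])
    moreover have "r \<le> real (nat \<lceil>r\<rceil>)" by (rule real_nat_ceiling_ge)
    ultimately show False by simp
  qed
next
  assume d: "d > 0"
  have "(\<integral>\<^sup>+a. ennreal (exp (-d*a)) * indicator S a \<partial>lborel)
      \<le> (\<integral>\<^sup>+a. ennreal (exp (-d*a)) * indicator {0..} a \<partial>lborel)"
    by (rule nn_integral_mono) (use S in \<open>auto simp: indicator_def\<close>)
  also have "\<dots> = ennreal (exp (-d*0)/d)"
    by (rule nn_integral_has_integral_lebesgue') (use has_integral_exp_minus_to_infinity[OF d, of 0] in auto)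
  finally show "(\<integral>\<^sup>+a. ennreal (exp (-d*a)) * indicator S a \<partial>lborel) < \<infinity>"
    by (rule order.strict_trans1) simp
qed

lemma Af_lower:
  assumes "\<omega> \<noteq> 0"
  shows "\<omega>\<^sup>2 * exp (-a) ^ 2 \<le> 2 * (1 + \<eta>\<^sup>2) * Af \<eta> \<omega> a"
proof -
  define x where "x = exp (-a)"
  define w where "w = \<eta> + \<omega> * x"
  have "\<omega>\<^sup>2 * x^2 = (w - \<eta>)^2" by (simp add: w_def power_mult_distrib)
  also have "\<dots> \<le> 2 * w^2 + 2 * \<eta>^2"
  proof -
    have "(w - \<eta>)^2 + (w + \<eta>)^2 = 2 * w^2 + 2 * \<eta>^2" by (simp add: power2_eq_square algebra_simps)
    then show ?thesis using zero_le_power2[of "w + \<eta>"] by linarith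
  qed
  also have "\<dots> \<le> 2 * (1 + \<eta>\<^sup>2) * (1 + w^2)" by (simp add: algebra_simps)
  finally show ?thesis by (simp add: Af_def x_def w_def)
qed

lemma Af_upper:
  shows "Af \<eta> \<omega> a \<le> (1 + 2*\<eta>\<^sup>2 + 2*\<omega>\<^sup>2) * (if a < 0 then exp (-a) ^ 2 else 1)"
proof -
  define x where "x = exp (-a)"
  have sq: "(\<eta> + \<omega>*x)^2 + (\<eta> - \<omega>*x)^2 = 2*\<eta>\<^sup>2 + 2*\<omega>\<^sup>2*x^2"
    by (simp add: power2_eq_square algebra_simps)
  have "Af \<eta> \<omega> a \<le> 1 + 2*\<eta>\<^sup>2 + 2*\<omega>\<^sup>2 * x^2"
    unfolding Af_def x_def[symmetric] using sq zero_le_power2[of "\<eta> - \<omega>*x"] by linarith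
  show ?thesis
  proof (cases "a < 0")
    case True
    then have x1: "1 \<le> x^2" by (simp add: x_def)
    have "\<eta>\<^sup>2 \<le> \<eta>\<^sup>2 * x^2" using x1 mult_left_mono[OF x1, of "\<eta>\<^sup>2"] by simp
    then show ?thesis using True \<open>Af \<eta> \<omega> a \<le> _\<close> x1 by (simp add: x_def[symmetric] algebra_simps)
  next
    case False
    then have x1: "x^2 \<le> 1" by (simp add: x_def exp_le_one_iff power_le_one)
    have "\<omega>\<^sup>2 * x^2 \<le> \<omega>\<^sup>2" using mult_left_mono[OF x1, of "\<omega>\<^sup>2"] by simp
    then show ?thesis using False \<open>Af \<eta> \<omega> a \<le> _\<close> by simp
  qed
qed



definition Jf :: "real \<Rightarrow> real \<Rightarrow> real \<Rightarrow> real \<Rightarrow> ennreal" where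
  "Jf \<eta> \<omega> s c = (\<integral>\<^sup>+a. ennreal (exp (-c*a) * Af \<eta> \<omega> a powr ((1-s)/2)) \<partial>lborel)"

lemma F_fin:
  fixes c e :: real
  shows "(\<integral>\<^sup>+a. ennreal (exp (-c*a) * (if a < 0 then exp (e*a) else 1)) \<partial>lborel) < \<infinity>
     \<longleftrightarrow> c > 0 \<and> e > c"
proof -
  have [measurable]: "(\<lambda>a::real. ennreal (exp ((e-c)*a)) * indicator {..<0} a) \<in> borel_measurable borel"
    by measurable
  have eq: "(\<integral>\<^sup>+a. ennreal (exp (-c*a) * (if a < 0 then exp (e*a) else 1)) \<partial>lborel)
    = (\<integral>\<^sup>+a. ennreal (exp (-c*a)) * indicator {0..} a \<partial>lborel)
      + (\<integral>\<^sup>+a. ennreal (exp ((e-c)*a)) * indicator {..<0} a \<partial>lborel)"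
  proof -
    have "(\<integral>\<^sup>+a. ennreal (exp (-c*a) * (if a < 0 then exp (e*a) else 1)) \<partial>lborel)
      = (\<integral>\<^sup>+a. ennreal (exp (-c*a)) * indicator {0..} a + ennreal (exp ((e-c)*a)) * indicator {..<0} a \<partial>lborel)"
      by (rule nn_integral_cong) (auto simp: indicator_def algebra_simps simp flip: exp_add)
    also have "\<dots> = (\<integral>\<^sup>+a. ennreal (exp (-c*a)) * indicator {0..} a \<partial>lborel)
      + (\<integral>\<^sup>+a. ennreal (exp ((e-c)*a)) * indicator {..<0} a \<partial>lborel)"
      by (rule nn_integral_add) auto
    finally show ?thesis .
  qed
  have "(\<integral>\<^sup>+a. ennreal (exp ((e-c)*a)) * indicator {..<0} a \<partial>lborel)
     = ennreal \<bar>-1::real\<bar> * (\<integral>\<^sup>+a. ennreal (exp ((e-c)*(0 + -1*a))) * indicator {..<0} (0 + -1*a) \<partial>lborel)"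
    by (rule nn_integral_real_affine[where c="-1" and t=0]) auto
  also have "\<dots> = (\<integral>\<^sup>+a. ennreal (exp (-(e-c)*a)) * indicator {0<..} a \<partial>lborel)"
    by (simp add: indicator_def algebra_simps)
  finally have eq2: "(\<integral>\<^sup>+a. ennreal (exp ((e-c)*a)) * indicator {..<0} a \<partial>lborel)
     = (\<integral>\<^sup>+a. ennreal (exp (-(e-c)*a)) * indicator {0<..} a \<partial>lborel)" .
  have t1: "(\<integral>\<^sup>+a. ennreal (exp (-c*a)) * indicator {0..} a \<partial>lborel) < \<infinity> \<longleftrightarrow> c > 0"
    by (rule exp_tail) auto
  have t2: "(\<integral>\<^sup>+a. ennreal (exp (-(e-c)*a)) * indicator {0<..} a \<partial>lborel) < \<infinity> \<longleftrightarrow> e - c > 0"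
    by (rule exp_tail) auto
  show ?thesis
    unfolding eq eq2 using t1 t2 by auto
qed



lemma J_fin:
  assumes om: "\<omega> \<noteq> 0" and s: "s > 1"
  shows "Jf \<eta> \<omega> s c < \<infinity> \<longleftrightarrow> c > 0 \<and> s > 1 + c"
proof -
  define p where "p = (1-s)/2"
  have p: "p \<le> 0" using s by (simp add: p_def)
  define \<kappa> where "\<kappa> = min 1 (\<omega>\<^sup>2 / (2*(1+\<eta>\<^sup>2)))"
  have \<kappa>: "\<kappa> > 0" using om by (simp add: \<kappa>_def add_pos_nonneg)
  define K where "K = 1 + 2*\<eta>\<^sup>2 + 2*\<omega>\<^sup>2"
  have K: "K > 0" by (simp add: K_def add_pos_nonneg)
  define m where "m a = (if a < 0 then exp (-a) ^ 2 else 1)" for a :: real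
  have m: "m a > 0" for a by (simp add: m_def)
  define F where "F a = exp (-c*a) * (if a < 0 then exp ((s-1)*a) else 1)" for a :: real
  have mp: "m a powr p = (if a < 0 then exp ((s-1)*a) else 1)" for a
  proof (cases "a < 0")
    case True
    have "exp (-a) ^ 2 = exp (-2*a)" by (simp flip: exp_of_nat_mult)
    then have "m a powr p = exp (p * (-2*a))" using True by (simp add: m_def powr_def)
    also have "p * (-2*a) = (s-1)*a" by (simp add: p_def field_simps)
    finally show ?thesis using True by simp
  qed (simp add: m_def)
  have low: "\<kappa> * m a \<le> Af \<eta> \<omega> a" for a
  proof (cases "a < 0")
    case True
    have h: "\<omega>\<^sup>2 * exp (-a) ^ 2 \<le> 2 * (1 + \<eta>\<^sup>2) * Af \<eta> \<omega> a" by (rule Af_lower[OF om])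
    have pos: "2 * (1 + \<eta>\<^sup>2) > 0" by (simp add: add_pos_nonneg)
    have "\<kappa> * m a \<le> (\<omega>\<^sup>2 / (2*(1+\<eta>\<^sup>2))) * exp (-a) ^ 2"
      using True mult_right_mono[OF min.cobounded2[of 1 "\<omega>\<^sup>2 / (2*(1+\<eta>\<^sup>2))"], of "exp (-a) ^ 2"]
      by (simp add: m_def \<kappa>_def)
    also have "\<dots> \<le> Af \<eta> \<omega> a" using h pos by (simp add: field_simps)
    finally show ?thesis .
  next
    case False
    then show ?thesis using Af_ge1[of \<eta> \<omega> a] by (simp add: m_def \<kappa>_def)
  qed
  have up: "Af \<eta> \<omega> a \<le> K * m a" for a
    using Af_upper[of \<eta> \<omega> a] by (simp add: K_def m_def)
  have e_up: "exp (-c*a) * Af \<eta> \<omega> a powr p \<le> \<kappa> powr p * F a" for a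
  proof -
    have "Af \<eta> \<omega> a powr p \<le> (\<kappa> * m a) powr p"
      by (rule powr_mono2'[OF p]) (use \<kappa> m low in auto)
    also have "\<dots> = \<kappa> powr p * m a powr p" using \<kappa> m by (simp add: powr_mult)
    finally show ?thesis by (simp add: F_def mp mult_left_mono mult.left_commute)
  qed
  have e_low: "K powr p * F a \<le> exp (-c*a) * Af \<eta> \<omega> a powr p" for a
  proof -
    have "(K * m a) powr p \<le> Af \<eta> \<omega> a powr p"
      by (rule powr_mono2'[OF p]) (use K m up Af_ge1[of \<eta> \<omega> a] in auto)
    moreover have "(K * m a) powr p = K powr p * m a powr p" using K m by (simp add: powr_mult)
    ultimately show ?thesis by (simp add: F_def mp mult_left_mono mult.left_commute)
  qed
  have [measurable]: "F \<in> borel_measurable borel" unfolding F_def by measurable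
  have J1: "Jf \<eta> \<omega> s c \<le> ennreal (\<kappa> powr p) * (\<integral>\<^sup>+a. ennreal (F a) \<partial>lborel)"
  proof -
    have "Jf \<eta> \<omega> s c \<le> (\<integral>\<^sup>+a. ennreal (\<kappa> powr p) * ennreal (F a) \<partial>lborel)"
      unfolding Jf_def p_def[symmetric]
    proof (rule nn_integral_mono)
      fix a
      show "ennreal (exp (-c*a) * Af \<eta> \<omega> a powr p) \<le> ennreal (\<kappa> powr p) * ennreal (F a)"
        using e_up[of a] by (simp add: ennreal_mult'[symmetric] ennreal_leI)
    qed
    also have "\<dots> = ennreal (\<kappa> powr p) * (\<integral>\<^sup>+a. ennreal (F a) \<partial>lborel)"
      by (rule nn_integral_cmult) measurable
    finally show ?thesis .
  qed
  have J2: "ennreal (K powr p) * (\<integral>\<^sup>+a. ennreal (F a) \<partial>lborel) \<le> Jf \<eta> \<omega> s c"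
  proof -
    have "ennreal (K powr p) * (\<integral>\<^sup>+a. ennreal (F a) \<partial>lborel) = (\<integral>\<^sup>+a. ennreal (K powr p) * ennreal (F a) \<partial>lborel)"
      by (rule nn_integral_cmult[symmetric]) measurable
    also have "\<dots> \<le> Jf \<eta> \<omega> s c"
      unfolding Jf_def p_def[symmetric]
    proof (rule nn_integral_mono)
      fix a
      show "ennreal (K powr p) * ennreal (F a) \<le> ennreal (exp (-c*a) * Af \<eta> \<omega> a powr p)"
        using e_low[of a] by (simp add: ennreal_mult'[symmetric] ennreal_leI)
    qed
    finally show ?thesis .
  qed
  have Kp: "ennreal (K powr p) > 0" using K by simp
  have "Jf \<eta> \<omega> s c < \<infinity> \<longleftrightarrow> (\<integral>\<^sup>+a. ennreal (F a) \<partial>lborel) < \<infinity>"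
  proof
    assume "Jf \<eta> \<omega> s c < \<infinity>"
    then have "ennreal (K powr p) * (\<integral>\<^sup>+a. ennreal (F a) \<partial>lborel) < \<infinity>" using J2 by (rule le_less_trans[rotated])
    then show "(\<integral>\<^sup>+a. ennreal (F a) \<partial>lborel) < \<infinity>" using Kp by (auto simp: ennreal_mult_less_top top.not_eq_extremum)
  next
    assume "(\<integral>\<^sup>+a. ennreal (F a) \<partial>lborel) < \<infinity>"
    then have "ennreal (\<kappa> powr p) * (\<integral>\<^sup>+a. ennreal (F a) \<partial>lborel) < \<infinity>" by (simp add: ennreal_mult_less_top)
    then show "Jf \<eta> \<omega> s c < \<infinity>" using J1 by (rule le_less_trans[rotated])
  qed
  also have "\<dots> \<longleftrightarrow> c > 0 \<and> s - 1 > c" unfolding F_def by (rule F_fin)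
  finally show ?thesis by auto
qed



lemma I_fin: assumes s: "s > 1" shows "Iint s < \<infinity>"
proof -
  have [measurable]: "(\<lambda>t::real. ennreal (t powr (-s)) * indicator {1..} t) \<in> borel_measurable borel" by measurable
  have "Iint s \<le> (\<integral>\<^sup>+t. indicator {-1..1} t + (ennreal (t powr (-s)) * indicator {1..} t
          + ennreal ((-t) powr (-s)) * indicator {1..} (-t)) \<partial>lborel)"
    unfolding Iint_def by (rule nn_integral_mono) (rule pt_bound[OF s])
  also have "\<dots> = (\<integral>\<^sup>+t. indicator {-1..1::real} t \<partial>lborel) + (\<integral>\<^sup>+t. ennreal (t powr (-s)) * indicator {1..} t
          + ennreal ((-t) powr (-s)) * indicator {1..} (-t) \<partial>lborel)"
    by (rule nn_integral_add) measurable
  also have "(\<integral>\<^sup>+t. ennreal (t powr (-s)) * indicator {1..} t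
          + ennreal ((-t) powr (-s)) * indicator {1..} (-t) \<partial>lborel) = (\<integral>\<^sup>+t. ennreal (t powr (-s)) * indicator {1..} t \<partial>lborel)
          + (\<integral>\<^sup>+t. ennreal ((-t) powr (-s)) * indicator {1..} (-t) \<partial>lborel)"
    by (rule nn_integral_add) measurable
  also have "(\<integral>\<^sup>+t. ennreal ((-t) powr (-s)) * indicator {1..} (-t) \<partial>lborel)
      = ennreal \<bar>-1::real\<bar> * (\<integral>\<^sup>+t. ennreal ((-(0 + -1*t)) powr (-s)) * indicator {1..} (-(0 + -1*t)) \<partial>lborel)"
    by (rule nn_integral_real_affine[where c="-1" and t=0]) auto
  also have "\<dots> = (\<integral>\<^sup>+t. ennreal (t powr (-s)) * indicator {1..} t \<partial>lborel)" by simp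
  finally have H: "Iint s \<le> (\<integral>\<^sup>+t. indicator {-1..1::real} t \<partial>lborel) + ((\<integral>\<^sup>+t. ennreal (t powr (-s)) * indicator {1..} t \<partial>lborel)
          + (\<integral>\<^sup>+t. ennreal (t powr (-s)) * indicator {1..} t \<partial>lborel))" .
  have "(\<integral>\<^sup>+t. indicator {-1..1::real} t \<partial>lborel) + ((\<integral>\<^sup>+t. ennreal (t powr (-s)) * indicator {1..} t \<partial>lborel)
          + (\<integral>\<^sup>+t. ennreal (t powr (-s)) * indicator {1..} t \<partial>lborel)) < \<infinity>"
    using pow_tail_fin[OF s] by (simp add: less_top ennreal_add_eq_top)
  with H show ?thesis by (rule le_less_trans)
qed

lemma I_pos: assumes s: "s > 1" shows "Iint s \<noteq> 0"
proof -
  have "ennreal (2 powr (-s/2)) * emeasure lborel {0..1::real} \<le> Iint s"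
  proof -
    have "ennreal (2 powr (-s/2)) * emeasure lborel {0..1::real} = (\<integral>\<^sup>+t. ennreal (2 powr (-s/2)) * indicator {0..1::real} t \<partial>lborel)"
      by (rule nn_integral_cmult_indicator[symmetric]) simp
    also have "\<dots> \<le> Iint s" unfolding Iint_def
    proof (rule nn_integral_mono)
      fix t :: real
      show "ennreal (2 powr (-s/2)) * indicator {0..1} t \<le> ennreal ((1+t^2) powr (-s/2))"
      proof (cases "t \<in> {0..1}")
        case True
        then have "t^2 \<le> 1" by (simp add: power_le_one)
        then have "(1+t^2) powr (-s/2) \<ge> 2 powr (-s/2)"
          using s by (intro powr_mono2') (auto simp: add_pos_nonneg)
        then show ?thesis using True by (simp add: ennreal_leI)
      qed simp
    qed
    finally show ?thesis .
  qed
  then show ?thesis by (auto simp: ennreal_zero_less_mult_iff)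
qed



lemma gfun_nonneg: "gfun \<eta> \<omega> s c a b \<ge> 0"
  by (simp add: gfun_def)

lemma Q_ge1: "1 + exp (- 2 * a) * b\<^sup>2 + (\<eta> + \<omega> * exp (- a))\<^sup>2 \<ge> (1::real)"
  by (simp add: add_nonneg_nonneg)

lemma gfun_mono_s: "s \<le> s' \<Longrightarrow> gfun \<eta> \<omega> s' c a b \<le> gfun \<eta> \<omega> s c a b"
  unfolding gfun_def by (intro mult_left_mono powr_mono Q_ge1) auto

lemma gfun_meas2[measurable]: "(\<lambda>(a, b). gfun \<eta> \<omega> s c a b) \<in> borel_measurable (lborel \<Otimes>\<^sub>M lborel :: (real \<times> real) measure)"
  unfolding gfun_def by measurable

lemma gfun_meas: "(\<lambda>(a, b). gfun \<eta> \<omega> s c a b) \<in> borel_measurable (lborel :: (real \<times> real) measure)"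
  using gfun_meas2 by (simp add: lborel_prod)

lemma part1_gt1:
  assumes om: "\<omega> \<noteq> 0" and s: "s > 1"
  shows "integrable (lborel :: (real \<times> real) measure) (\<lambda>(a, b). gfun \<eta> \<omega> s c a b) \<longleftrightarrow> c > 0 \<and> s > 1 + c"
proof -
  have m2: "(\<lambda>x. ennreal (case x of (a, b) \<Rightarrow> gfun \<eta> \<omega> s c a b)) \<in> borel_measurable (lborel \<Otimes>\<^sub>M lborel)"
    by measurable
  have "(\<integral>\<^sup>+x. ennreal (norm (case x of (a, b) \<Rightarrow> gfun \<eta> \<omega> s c a b)) \<partial>(lborel :: (real \<times> real) measure))
      = (\<integral>\<^sup>+x. ennreal (case x of (a, b) \<Rightarrow> gfun \<eta> \<omega> s c a b) \<partial>(lborel \<Otimes>\<^sub>M lborel))"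
    by (simp add: lborel_prod gfun_nonneg case_prod_beta)
  also have "\<dots> = (\<integral>\<^sup>+a. \<integral>\<^sup>+b. ennreal (gfun \<eta> \<omega> s c a b) \<partial>lborel \<partial>lborel)"
    using lborel.nn_integral_fst[OF m2] by simp
  also have "\<dots> = (\<integral>\<^sup>+a. ennreal (exp (-c*a) * Af \<eta> \<omega> a powr ((1-s)/2)) * Iint s \<partial>lborel)"
    by (simp add: inner)
  also have "\<dots> = Jf \<eta> \<omega> s c * Iint s"
    unfolding Jf_def by (rule nn_integral_multc) (unfold Af_def, measurable)
  finally have eq: "(\<integral>\<^sup>+x. ennreal (norm (case x of (a, b) \<Rightarrow> gfun \<eta> \<omega> s c a b)) \<partial>(lborel :: (real \<times> real) measure)) = Jf \<eta> \<omega> s c * Iint s" .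
  have "integrable (lborel :: (real \<times> real) measure) (\<lambda>(a, b). gfun \<eta> \<omega> s c a b) \<longleftrightarrow> Jf \<eta> \<omega> s c * Iint s < \<infinity>"
    unfolding integrable_iff_bounded eq using gfun_meas by simp
  also have "\<dots> \<longleftrightarrow> Jf \<eta> \<omega> s c < \<infinity>"
    using I_fin[OF s] I_pos[OF s] by (auto simp: ennreal_mult_less_top top.not_eq_extremum)
  also have "\<dots> \<longleftrightarrow> c > 0 \<and> s > 1 + c" by (rule J_fin[OF om s])
  finally show ?thesis .
qed

lemma part1:
  assumes om: "\<omega> \<noteq> 0"
  shows "integrable (lborel :: (real \<times> real) measure) (\<lambda>(a, b). gfun \<eta> \<omega> s c a b) \<longleftrightarrow> c > 0 \<and> s > 1 + c"
proof (cases "s > 1")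
  case True
  then show ?thesis by (rule part1_gt1[OF om])
next
  case False
  define s' where "s' = (if c > 0 then 1 + c else 2)"
  have s's: "s \<le> s'" "s' > 1" "\<not> (c > 0 \<and> s' > 1 + c)" using False by (auto simp: s'_def)
  have "\<not> integrable (lborel :: (real \<times> real) measure) (\<lambda>(a, b). gfun \<eta> \<omega> s c a b)"
  proof
    assume "integrable (lborel :: (real \<times> real) measure) (\<lambda>(a, b). gfun \<eta> \<omega> s c a b)"
    then have "integrable (lborel :: (real \<times> real) measure) (\<lambda>(a, b). gfun \<eta> \<omega> s' c a b)"
      by (rule Bochner_Integration.integrable_bound) (rule gfun_meas,
          auto simp: gfun_nonneg gfun_mono_s[OF s's(1)] split: prod.splits)
    then show False using part1_gt1[OF om s's(2)] s's(3) by simp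
  qed
  then show ?thesis using False by auto
qed



lemma absprod_le: "\<bar>p\<bar> * \<bar>q\<bar> \<le> p^2 + (q::real)^2"
proof -
  have "0 \<le> (\<bar>p\<bar> - \<bar>q\<bar>)^2" by simp
  then have "2 * (\<bar>p\<bar> * \<bar>q\<bar>) \<le> p^2 + q^2" by (simp add: power2_eq_square algebra_simps abs_mult_self_eq)
  then show ?thesis by (smt (verit) zero_le_power2 abs_ge_zero mult_nonneg_nonneg)
qed

lemma K1g:
  fixes x b \<eta> \<omega> :: real
  assumes om: "\<omega> \<noteq> 0" and x: "x \<ge> 0"
  shows "\<bar>x^2*b\<bar> \<le> (1+\<bar>\<eta>\<bar>)/\<bar>\<omega>\<bar> * (1 + x^2*b^2 + (\<eta>+\<omega>*x)^2)"
proof -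
  define u where "u = x*b"
  define w where "w = \<eta>+\<omega>*x"
  define Q where "Q = 1 + u^2 + w^2"
  have Qe: "1 + x^2*b^2 + (\<eta>+\<omega>*x)^2 = Q" by (simp add: Q_def u_def w_def power_mult_distrib)
  have e: "\<bar>x^2*b\<bar> = x * \<bar>u\<bar>" using x by (simp add: u_def abs_mult power2_eq_square)
  have h1: "\<bar>\<omega>\<bar>*x \<le> \<bar>w\<bar> + \<bar>\<eta>\<bar>"
  proof -
    have "\<bar>\<omega>\<bar>*x = \<bar>w - \<eta>\<bar>" using x by (simp add: w_def abs_mult)
    then show ?thesis by linarith
  qed
  have h2: "\<bar>w\<bar>*\<bar>u\<bar> \<le> Q" using absprod_le[of w u] by (simp add: Q_def)
  have h3: "\<bar>u\<bar> \<le> Q" using absprod_le[of 1 u] by (simp add: Q_def) (insert zero_le_power2[of w], linarith)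
  have "\<bar>\<omega>\<bar>*(x*\<bar>u\<bar>) \<le> (\<bar>w\<bar> + \<bar>\<eta>\<bar>)*\<bar>u\<bar>" using mult_right_mono[OF h1, of "\<bar>u\<bar>"] by (simp add: mult.assoc)
  also have "\<dots> \<le> Q + \<bar>\<eta>\<bar>*Q" using h2 mult_left_mono[OF h3, of "\<bar>\<eta>\<bar>"] by (simp add: algebra_simps)
  finally have "\<bar>\<omega>\<bar>*(x*\<bar>u\<bar>) \<le> (1+\<bar>\<eta>\<bar>)*Q" by (simp add: algebra_simps)
  then have "x*\<bar>u\<bar> \<le> (1+\<bar>\<eta>\<bar>)*Q/\<bar>\<omega>\<bar>" using om by (simp add: field_simps)
  then show ?thesis unfolding Qe e by simp
qed

lemma K2g:
  fixes x b \<eta> \<omega> :: real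
  assumes x: "x \<ge> 0"
  shows "\<bar>-2*x^2*b^2 - 2*(\<eta>+\<omega>*x)*\<omega>*x\<bar> \<le> (4+2*\<bar>\<eta>\<bar>) * (1 + x^2*b^2 + (\<eta>+\<omega>*x)^2)"
proof -
  define u where "u = x*b"
  define w where "w = \<eta>+\<omega>*x"
  define Q where "Q = 1 + u^2 + w^2"
  have Qe: "1 + x^2*b^2 + (\<eta>+\<omega>*x)^2 = Q" by (simp add: Q_def u_def w_def power_mult_distrib)
  have e: "-2*x^2*b^2 - 2*(\<eta>+\<omega>*x)*\<omega>*x = -2*u^2 - 2*w*(\<omega>*x)" by (simp add: u_def w_def power_mult_distrib)
  have h1: "\<bar>\<omega>*x\<bar> \<le> \<bar>w\<bar> + \<bar>\<eta>\<bar>"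
  proof -
    have "\<bar>\<omega>*x\<bar> = \<bar>w - \<eta>\<bar>" by (simp add: w_def)
    then show ?thesis by linarith
  qed
  have h3: "\<bar>w\<bar> \<le> Q" using absprod_le[of 1 w] by (simp add: Q_def) (insert zero_le_power2[of u], linarith)
  have "\<bar>-2*u^2 - 2*w*(\<omega>*x)\<bar> \<le> 2*u^2 + 2*(\<bar>w\<bar>*\<bar>\<omega>*x\<bar>)" 
  proof -
    have "\<bar>-2*u^2 - 2*w*(\<omega>*x)\<bar> \<le> \<bar>-2*u^2\<bar> + \<bar>2*w*(\<omega>*x)\<bar>" by (rule abs_triangle_ineq4)
    also have "\<dots> = 2*u^2 + 2*(\<bar>w\<bar>*\<bar>\<omega>*x\<bar>)" by (simp add: abs_mult)
    finally show ?thesis .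
  qed
  also have "\<dots> \<le> 2*u^2 + 2*(\<bar>w\<bar>*(\<bar>w\<bar> + \<bar>\<eta>\<bar>))" using mult_left_mono[OF h1, of "\<bar>w\<bar>"] by simp
  also have "\<dots> = 2*u^2 + 2*w^2 + 2*(\<bar>\<eta>\<bar>*\<bar>w\<bar>)" by (simp add: algebra_simps power2_eq_square abs_mult_self_eq)
  also have "\<dots> \<le> 2*Q + 2*(\<bar>\<eta>\<bar>*Q)" using mult_left_mono[OF h3, of "\<bar>\<eta>\<bar>"] by (simp add: Q_def)
  also have "\<dots> \<le> (4+2*\<bar>\<eta>\<bar>)*Q" using h3 by (simp add: algebra_simps)
  finally show ?thesis unfolding Qe e .
qed



definition Qf :: "real \<Rightarrow> real \<Rightarrow> real \<Rightarrow> real \<Rightarrow> real" where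
  "Qf \<eta> \<omega> a b = 1 + exp (- 2 * a) * b\<^sup>2 + (\<eta> + \<omega> * exp (- a))\<^sup>2"
definition Qa :: "real \<Rightarrow> real \<Rightarrow> real \<Rightarrow> real \<Rightarrow> real" where
  "Qa \<eta> \<omega> a b = -2*exp (-2*a)*b^2 - 2*(\<eta>+\<omega>*exp (-a))*\<omega>*exp (-a)"
definition hf :: "real \<Rightarrow> real \<Rightarrow> real \<Rightarrow> real \<Rightarrow> real \<Rightarrow> real" where
  "hf \<eta> \<omega> s a b = -s*exp (-2*a)*b / Qf \<eta> \<omega> a b"

lemma Qf_ge1: "Qf \<eta> \<omega> a b \<ge> 1" by (simp add: Qf_def add_nonneg_nonneg)
lemma Qf_pos: "Qf \<eta> \<omega> a b > 0" using Qf_ge1[of \<eta> \<omega> a b] by linarith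

lemma gfun_Q: "gfun \<eta> \<omega> s c a b = exp (-(1+c)*a) * Qf \<eta> \<omega> a b powr (-s/2)"
  by (simp add: gfun_def Qf_def)

lemma powr_deriv:
  assumes "(F has_real_derivative F') (at x)" "F x > 0"
  shows "((\<lambda>x. F x powr r) has_real_derivative F x powr r * (F' * r / F x)) (at x)"
  using DERIV_powr[OF assms, of "\<lambda>_. r" 0] by simp

lemma dQa: "((\<lambda>x. Qf \<eta> \<omega> x b) has_real_derivative Qa \<eta> \<omega> a b) (at a)"
  unfolding Qf_def Qa_def
  by (auto intro!: derivative_eq_intros simp: algebra_simps power2_eq_square)

lemma dQb: "((\<lambda>y. Qf \<eta> \<omega> a y) has_real_derivative 2*exp (-2*a)*b) (at b)"
  unfolding Qf_def
  by (auto intro!: derivative_eq_intros simp: algebra_simps power2_eq_square)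

lemma d_b: "((\<lambda>y. gfun \<eta> \<omega> s c a y) has_real_derivative gfun \<eta> \<omega> s c a b * hf \<eta> \<omega> s a b) (at b)"
proof -
  have "((\<lambda>y. exp (-(1+c)*a) * Qf \<eta> \<omega> a y powr (-s/2)) has_real_derivative
      exp (-(1+c)*a) * (Qf \<eta> \<omega> a b powr (-s/2) * (2*exp (-2*a)*b * (-s/2) / Qf \<eta> \<omega> a b))) (at b)"
    by (intro DERIV_cmult powr_deriv dQb Qf_pos)
  moreover have "exp (-(1+c)*a) * (Qf \<eta> \<omega> a b powr (-s/2) * (2*exp (-2*a)*b * (-s/2) / Qf \<eta> \<omega> a b))
     = gfun \<eta> \<omega> s c a b * hf \<eta> \<omega> s a b"
    by (simp add: gfun_Q hf_def)
  ultimately show ?thesis by (simp add: gfun_Q)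
qed

lemma d_a: "((\<lambda>x. gfun \<eta> \<omega> s c x b) has_real_derivative
    gfun \<eta> \<omega> s c a b * (-(1+c) + Qa \<eta> \<omega> a b * (-s/2) / Qf \<eta> \<omega> a b)) (at a)"
proof -
  have "((\<lambda>x. exp (-(1+c)*x) * Qf \<eta> \<omega> x b powr (-s/2)) has_real_derivative
      exp (-(1+c)*a) * (Qf \<eta> \<omega> a b powr (-s/2) * (Qa \<eta> \<omega> a b * (-s/2) / Qf \<eta> \<omega> a b)) + (exp (-(1+c)*a) * (-(1+c))) * Qf \<eta> \<omega> a b powr (-s/2)) (at a)"
    by (intro DERIV_mult' powr_deriv dQa Qf_pos) (auto intro!: derivative_eq_intros)
  moreover have "exp (-(1+c)*a) * (Qf \<eta> \<omega> a b powr (-s/2) * (Qa \<eta> \<omega> a b * (-s/2) / Qf \<eta> \<omega> a b)) + (exp (-(1+c)*a) * (-(1+c))) * Qf \<eta> \<omega> a b powr (-s/2)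
     = gfun \<eta> \<omega> s c a b * (-(1+c) + Qa \<eta> \<omega> a b * (-s/2) / Qf \<eta> \<omega> a b)"
    by (simp add: gfun_Q algebra_simps)
  ultimately show ?thesis by (simp add: gfun_Q)
qed

lemma dh_a: "((\<lambda>x. hf \<eta> \<omega> s x b) has_real_derivative hf \<eta> \<omega> s a b * (-2 - Qa \<eta> \<omega> a b / Qf \<eta> \<omega> a b)) (at a)"
proof -
  have "((\<lambda>x. -s*exp (-2*x)*b / Qf \<eta> \<omega> x b) has_real_derivative
     ((-s*(exp (-2*a) * (-2))*b) * Qf \<eta> \<omega> a b - (-s*exp (-2*a)*b) * Qa \<eta> \<omega> a b) / (Qf \<eta> \<omega> a b * Qf \<eta> \<omega> a b)) (at a)"
    by (intro DERIV_divide dQa) (auto intro!: derivative_eq_intros simp: Qf_pos[THEN less_imp_neq, symmetric])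
  moreover have "((-s*(exp (-2*a) * (-2))*b) * Qf \<eta> \<omega> a b - (-s*exp (-2*a)*b) * Qa \<eta> \<omega> a b) / (Qf \<eta> \<omega> a b * Qf \<eta> \<omega> a b)
     = hf \<eta> \<omega> s a b * (-2 - Qa \<eta> \<omega> a b / Qf \<eta> \<omega> a b)"
    using Qf_pos[of \<eta> \<omega> a b] by (simp add: hf_def field_simps)
  ultimately show ?thesis by (simp add: hf_def)
qed



lemma B1:
  assumes om: "\<omega> \<noteq> 0"
  shows "\<bar>hf \<eta> \<omega> s a b\<bar> \<le> \<bar>s\<bar> * ((1+\<bar>\<eta>\<bar>)/\<bar>\<omega>\<bar>)"
proof -
  have e2: "exp (-2*a) = exp (-a)^2" by (simp flip: exp_of_nat_mult)
  have Qe: "Qf \<eta> \<omega> a b = 1 + exp (-a)^2*b^2 + (\<eta>+\<omega>*exp (-a))^2" unfolding Qf_def e2 by (rule refl)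
  have k: "\<bar>exp (-a)^2*b\<bar> \<le> (1+\<bar>\<eta>\<bar>)/\<bar>\<omega>\<bar> * Qf \<eta> \<omega> a b"
    unfolding Qe by (rule K1g[OF om]) simp
  have "\<bar>hf \<eta> \<omega> s a b\<bar> = \<bar>s\<bar> * \<bar>exp (-a)^2*b\<bar> / Qf \<eta> \<omega> a b"
    using Qf_pos[of \<eta> \<omega> a b] unfolding hf_def e2 by (simp add: abs_mult abs_divide)
  also have "\<dots> \<le> \<bar>s\<bar> * ((1+\<bar>\<eta>\<bar>)/\<bar>\<omega>\<bar> * Qf \<eta> \<omega> a b) / Qf \<eta> \<omega> a b"
    using Qf_pos[of \<eta> \<omega> a b] k by (intro divide_right_mono mult_left_mono) auto
  also have "\<dots> = \<bar>s\<bar> * ((1+\<bar>\<eta>\<bar>)/\<bar>\<omega>\<bar>)"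
    using Qf_pos[of \<eta> \<omega> a b] by simp
  finally show ?thesis .
qed

lemma B2: "\<bar>Qa \<eta> \<omega> a b / Qf \<eta> \<omega> a b\<bar> \<le> 4 + 2*\<bar>\<eta>\<bar>"
proof -
  have e2: "exp (-2*a) = exp (-a)^2" by (simp flip: exp_of_nat_mult)
  have Qe: "Qf \<eta> \<omega> a b = 1 + exp (-a)^2*b^2 + (\<eta>+\<omega>*exp (-a))^2" unfolding Qf_def e2 by (rule refl)
  have Qae: "Qa \<eta> \<omega> a b = -2*exp (-a)^2*b^2 - 2*(\<eta>+\<omega>*exp (-a))*\<omega>*exp (-a)" unfolding Qa_def e2 by (rule refl)
  have k: "\<bar>Qa \<eta> \<omega> a b\<bar> \<le> (4+2*\<bar>\<eta>\<bar>) * Qf \<eta> \<omega> a b"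
    unfolding Qe Qae by (rule K2g) simp
  then show ?thesis using Qf_pos[of \<eta> \<omega> a b] by (simp add: abs_divide field_simps)
qed

lemma part2:
  assumes om: "\<omega> \<noteq> 0"
  shows "\<exists>M > 0. \<forall>a b.
            \<bar>deriv (\<lambda>x. gfun \<eta> \<omega> s c x b) a\<bar> \<le> M * gfun \<eta> \<omega> s c a b
          \<and> \<bar>deriv (\<lambda>y. gfun \<eta> \<omega> s c a y) b\<bar> \<le> M * gfun \<eta> \<omega> s c a b
          \<and> \<bar>deriv (\<lambda>x. deriv (\<lambda>y. gfun \<eta> \<omega> s c x y) b) a\<bar> \<le> M * gfun \<eta> \<omega> s c a b"
proof -
  define C1 where "C1 = \<bar>s\<bar> * ((1+\<bar>\<eta>\<bar>)/\<bar>\<omega>\<bar>)"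
  define C2 where "C2 = 4 + 2*\<bar>\<eta>\<bar>"
  define M where "M = 1 + C1 + (\<bar>1+c\<bar> + \<bar>s\<bar>/2 * C2) + C1 * (\<bar>1+c\<bar> + \<bar>s\<bar>/2 * C2 + 2 + C2)"
  have C1: "C1 \<ge> 0" by (simp add: C1_def)
  have C2: "C2 \<ge> 0" by (simp add: C2_def)
  have M1: "C1 \<le> M" "\<bar>1+c\<bar> + \<bar>s\<bar>/2 * C2 \<le> M" "C1 * (\<bar>1+c\<bar> + \<bar>s\<bar>/2 * C2 + 2 + C2) \<le> M"
    using C1 C2 by (simp_all add: M_def)
  have M0: "M > 0"
  proof -
    have "0 \<le> \<bar>1+c\<bar> + \<bar>s\<bar>/2 * C2" using C2 by simp
    moreover have "0 \<le> C1 * (\<bar>1+c\<bar> + \<bar>s\<bar>/2 * C2 + 2 + C2)" using C1 C2 by simp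
    ultimately show ?thesis using C1 unfolding M_def by linarith
  qed
  have "\<forall>a b.
            \<bar>deriv (\<lambda>x. gfun \<eta> \<omega> s c x b) a\<bar> \<le> M * gfun \<eta> \<omega> s c a b
          \<and> \<bar>deriv (\<lambda>y. gfun \<eta> \<omega> s c a y) b\<bar> \<le> M * gfun \<eta> \<omega> s c a b
          \<and> \<bar>deriv (\<lambda>x. deriv (\<lambda>y. gfun \<eta> \<omega> s c x y) b) a\<bar> \<le> M * gfun \<eta> \<omega> s c a b"
  proof (intro allI conjI)
    fix a b
    define g where "g = gfun \<eta> \<omega> s c a b"
    have g0: "g \<ge> 0" by (simp add: g_def gfun_nonneg)
    have h: "\<bar>hf \<eta> \<omega> s a b\<bar> \<le> C1" unfolding C1_def by (rule B1[OF om])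
    have q: "\<bar>Qa \<eta> \<omega> a b / Qf \<eta> \<omega> a b\<bar> \<le> C2" unfolding C2_def by (rule B2)
    have fa: "\<bar>-(1+c) + Qa \<eta> \<omega> a b * (-s/2) / Qf \<eta> \<omega> a b\<bar> \<le> \<bar>1+c\<bar> + \<bar>s\<bar>/2 * C2"
    proof -
      have "\<bar>Qa \<eta> \<omega> a b * (-s/2) / Qf \<eta> \<omega> a b\<bar> = \<bar>s\<bar>/2 * \<bar>Qa \<eta> \<omega> a b / Qf \<eta> \<omega> a b\<bar>"
        by (simp add: abs_mult abs_divide)
      also have "\<dots> \<le> \<bar>s\<bar>/2 * C2" using q by (intro mult_left_mono) auto
      finally show ?thesis by linarith
    qed
    show "\<bar>deriv (\<lambda>x. gfun \<eta> \<omega> s c x b) a\<bar> \<le> M * gfun \<eta> \<omega> s c a b"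
    proof -
      have "deriv (\<lambda>x. gfun \<eta> \<omega> s c x b) a = g * (-(1+c) + Qa \<eta> \<omega> a b * (-s/2) / Qf \<eta> \<omega> a b)"
        unfolding g_def by (rule DERIV_imp_deriv[OF d_a])
      then have "\<bar>deriv (\<lambda>x. gfun \<eta> \<omega> s c x b) a\<bar> = g * \<bar>-(1+c) + Qa \<eta> \<omega> a b * (-s/2) / Qf \<eta> \<omega> a b\<bar>"
        using g0 by (simp add: abs_mult)
      also have "\<dots> \<le> g * M" using fa M1(2) g0 by (intro mult_left_mono) auto
      finally show ?thesis by (simp add: g_def mult.commute)
    qed
    show "\<bar>deriv (\<lambda>y. gfun \<eta> \<omega> s c a y) b\<bar> \<le> M * gfun \<eta> \<omega> s c a b"
    proof -
      have "deriv (\<lambda>y. gfun \<eta> \<omega> s c a y) b = g * hf \<eta> \<omega> s a b"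
        unfolding g_def by (rule DERIV_imp_deriv[OF d_b])
      then have "\<bar>deriv (\<lambda>y. gfun \<eta> \<omega> s c a y) b\<bar> = g * \<bar>hf \<eta> \<omega> s a b\<bar>"
        using g0 by (simp add: abs_mult)
      also have "\<dots> \<le> g * M" using h M1(1) g0 by (intro mult_left_mono) auto
      finally show ?thesis by (simp add: g_def mult.commute)
    qed
    show "\<bar>deriv (\<lambda>x. deriv (\<lambda>y. gfun \<eta> \<omega> s c x y) b) a\<bar> \<le> M * gfun \<eta> \<omega> s c a b"
    proof -
      have fe: "(\<lambda>x. deriv (\<lambda>y. gfun \<eta> \<omega> s c x y) b) = (\<lambda>x. gfun \<eta> \<omega> s c x b * hf \<eta> \<omega> s x b)"
        by (rule ext) (rule DERIV_imp_deriv[OF d_b])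
      have "((\<lambda>x. gfun \<eta> \<omega> s c x b * hf \<eta> \<omega> s x b) has_real_derivative
          gfun \<eta> \<omega> s c a b * (hf \<eta> \<omega> s a b * (-2 - Qa \<eta> \<omega> a b / Qf \<eta> \<omega> a b))
          + (gfun \<eta> \<omega> s c a b * (-(1+c) + Qa \<eta> \<omega> a b * (-s/2) / Qf \<eta> \<omega> a b)) * hf \<eta> \<omega> s a b) (at a)"
        by (rule DERIV_mult'[OF d_a dh_a])
      then have "deriv (\<lambda>x. deriv (\<lambda>y. gfun \<eta> \<omega> s c x y) b) a
          = g * (hf \<eta> \<omega> s a b * ((-(1+c) + Qa \<eta> \<omega> a b * (-s/2) / Qf \<eta> \<omega> a b) + (-2 - Qa \<eta> \<omega> a b / Qf \<eta> \<omega> a b)))"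
        unfolding fe g_def by (subst DERIV_imp_deriv) (auto simp: algebra_simps)
      then have "\<bar>deriv (\<lambda>x. deriv (\<lambda>y. gfun \<eta> \<omega> s c x y) b) a\<bar>
          = g * (\<bar>hf \<eta> \<omega> s a b\<bar> * \<bar>(-(1+c) + Qa \<eta> \<omega> a b * (-s/2) / Qf \<eta> \<omega> a b) + (-2 - Qa \<eta> \<omega> a b / Qf \<eta> \<omega> a b)\<bar>)"
        using g0 by (simp add: abs_mult)
      also have "\<dots> \<le> g * (C1 * (\<bar>1+c\<bar> + \<bar>s\<bar>/2 * C2 + 2 + C2))"
      proof (intro mult_left_mono g0 mult_mono h)
        have "\<bar>-2 - Qa \<eta> \<omega> a b / Qf \<eta> \<omega> a b\<bar> \<le> 2 + C2" using q by linarith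
        then show "\<bar>(-(1+c) + Qa \<eta> \<omega> a b * (-s/2) / Qf \<eta> \<omega> a b) + (-2 - Qa \<eta> \<omega> a b / Qf \<eta> \<omega> a b)\<bar>
          \<le> \<bar>1+c\<bar> + \<bar>s\<bar>/2 * C2 + 2 + C2" using fa by linarith
      qed (use C1 in auto)
      also have "\<dots> \<le> g * M" using M1(3) g0 by (intro mult_left_mono) auto
      finally show ?thesis by (simp add: g_def mult.commute)
    qed
  qed
  then show ?thesis using M0 by blast
qed

theorem mainTheorem7:
  fixes \<eta> \<omega> s c :: real
  assumes "\<omega> \<noteq> 0"
  shows "(integrable (lborel :: (real \<times> real) measure) (\<lambda>(a, b). gfun \<eta> \<omega> s c a b)
            \<longleftrightarrow> c > 0 \<and> s > 1 + c)
       \<and> (\<exists>M > 0. \<forall>a b.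
            \<bar>deriv (\<lambda>x. gfun \<eta> \<omega> s c x b) a\<bar> \<le> M * gfun \<eta> \<omega> s c a b
          \<and> \<bar>deriv (\<lambda>y. gfun \<eta> \<omega> s c a y) b\<bar> \<le> M * gfun \<eta> \<omega> s c a b
          \<and> \<bar>deriv (\<lambda>x. deriv (\<lambda>y. gfun \<eta> \<omega> s c x y) b) a\<bar> \<le> M * gfun \<eta> \<omega> s c a b)"
  using part1[OF assms] part2[OF assms] by blast

end
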